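(* Fix $1<s<3/2$ and $z\in\mathbb{D}$, write $K_{ij}=K(x_i,x_j)$, and for $N\ge1$ let \[ J_{N,2}'=2\int_{\mathcal{U}_N(z)^2}T_z(x_1)^{3s}T_z(x_2)^{s}\,[K_{11}K_{12}+K_{11}K_{21}]\,\det[K_{ij}]_{1\le i,j\le2}\,\mathrm{d}\mu(x_1)\,\mathrm{d}\mu(x_2). \] There exists $c_2'(s)>0$ such that for all large enough $N$, \[ |J_{N,2}'|\le c_2'(s)\frac{(1+|z|)^4}{(1-|z|)^4}e^{(3-2s)N}. \]
   Context: $\mathbb{D}$ is the open unit disk, $\mathrm{d}\mu=\frac{1}{\pi}\mathrm{d}x\,\mathrm{d}y$, $K(z,w)=(1-z\overline{w})^{-2}$. $\varphi_z(x)=\frac{z-x}{1-\overline{z}x}$, $d_{\mathrm{h}}(z,x)=\log\frac{1+|\varphi_z(x)|}{1-|\varphi_z(x)|}$, $T_z(x)=e^{-d_{\mathrm{h}}(z,x)}=\frac{1-|\varphi_z(x)|}{1+|\varphi_z(x)|}$, and $\mathcal{U}_N(z)=\{x\in\mathbb{D}:d_{\mathrm{h}}(z,x)<N\}$. *)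

theory Defs
  imports "HOL-Analysis.Analysis"
begin

definition bergK :: "complex \<Rightarrow> complex \<Rightarrow> complex" where
  "bergK z w = 1 / (1 - z * cnj w)^2"

definition mobius :: "complex \<Rightarrow> complex \<Rightarrow> complex" where
  "mobius z x = (z - x) / (1 - cnj z * x)"

definition hdist :: "complex \<Rightarrow> complex \<Rightarrow> real" where
  "hdist z x = ln ((1 + cmod (mobius z x)) / (1 - cmod (mobius z x)))"

definition Tz :: "complex \<Rightarrow> complex \<Rightarrow> real" where
  "Tz z x = (1 - cmod (mobius z x)) / (1 + cmod (mobius z x))"

definition hball :: "real \<Rightarrow> complex \<Rightarrow> complex set" where
  "hball N z = {x. cmod x < 1 \<and> hdist z x < N}"

text \<open>The quantity J'_{N,2}; mu = Lebesgue measure / pi on each factor,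
  so mu x mu = lborel on complex x complex divided by pi^2.\<close>
definition Jprime2 :: "real \<Rightarrow> complex \<Rightarrow> real \<Rightarrow> complex" where
  "Jprime2 s z N = 2 * complex_of_real (1 / pi^2) *
     set_lebesgue_integral lborel (hball N z \<times> hball N z) (\<lambda>(x1, x2).
        complex_of_real (((Tz z x1) powr (3 * s)) * ((Tz z x2) powr s)) *
        (bergK x1 x1 * bergK x1 x2 + bergK x1 x1 * bergK x2 x1) *
        (bergK x1 x1 * bergK x2 x2 - bergK x1 x2 * bergK x2 x1))"

end

theory Submission
  imports Defs
begin


lemma borel_measurable_Complex[measurable (raw)]:
  assumes "f \<in> borel_measurable M" "g \<in> borel_measurable M"
  shows "(\<lambda>x. Complex (f x) (g x)) \<in> borel_measurable M"
  unfolding Complex_eq using assms by measurable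

lemma borel_measurable_sgn'[measurable (raw)]:
  fixes f :: "'a \<Rightarrow> 'b::real_normed_vector"
  assumes "f \<in> borel_measurable M"
  shows "(\<lambda>x. sgn (f x)) \<in> borel_measurable M"
  by (rule measurable_compose[OF assms borel_measurable_sgn])

lemma sets_ball_complex[measurable]: "ball (c::complex) r \<in> sets borel" by simp
lemma sets_singleton_complex[measurable]: "{c::complex} \<in> sets borel" by simp

lemma lborel_complex_pair:
  "(lborel :: complex measure) = distr (lborel \<Otimes>\<^sub>M lborel) borel (\<lambda>p. Complex (fst p) (snd p))"
proof (rule lborel_eqI)
  fix l u :: complex
  assume le: "\<And>b. b \<in> Basis \<Longrightarrow> l \<bullet> b \<le> u \<bullet> b"
  have "Re l \<le> Re u" "Im l \<le> Im u" using le[of 1] le[of \<i>] by (auto simp: Basis_complex_def)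
  have eq: "(\<lambda>p. Complex (fst p) (snd p)) -` box l u \<inter> space (lborel \<Otimes>\<^sub>M lborel)
      = {Re l<..<Re u} \<times> {Im l<..<Im u}"
    by (auto simp: box_def Basis_complex_def space_pair_measure)
  have "emeasure (distr (lborel \<Otimes>\<^sub>M lborel) borel (\<lambda>p. Complex (fst p) (snd p))) (box l u)
      = emeasure (lborel \<Otimes>\<^sub>M lborel) ({Re l<..<Re u} \<times> {Im l<..<Im u})"
    by (subst emeasure_distr) (auto simp: eq)
  also have "\<dots> = ennreal (Re u - Re l) * ennreal (Im u - Im l)"
    using \<open>Re l \<le> Re u\<close> \<open>Im l \<le> Im u\<close> by (simp add: lborel.emeasure_pair_measure_Times)
  also have "\<dots> = ennreal ((\<Prod>b\<in>Basis. (u - l) \<bullet> b))"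
    using \<open>Re l \<le> Re u\<close> \<open>Im l \<le> Im u\<close>
    by (simp add: Basis_complex_def ennreal_mult')
  finally show "emeasure (distr (lborel \<Otimes>\<^sub>M lborel) borel (\<lambda>p. Complex (fst p) (snd p))) (box l u)
      = (\<Prod>b\<in>Basis. (u - l) \<bullet> b)" .
qed simp

lemma nn_integral_complex_pair:
  assumes [measurable]: "f \<in> borel_measurable (borel :: complex measure)"
  shows "(\<integral>\<^sup>+w. f w \<partial>lborel) = (\<integral>\<^sup>+x. \<integral>\<^sup>+y. f (Complex x y) \<partial>lborel \<partial>lborel)"
proof -
  have "(\<integral>\<^sup>+w. f w \<partial>lborel) = (\<integral>\<^sup>+p. f (Complex (fst p) (snd p)) \<partial>(lborel \<Otimes>\<^sub>M lborel))"
    by (subst lborel_complex_pair) (subst nn_integral_distr; simp)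
  also have "\<dots> = (\<integral>\<^sup>+x. \<integral>\<^sup>+y. f (Complex x y) \<partial>lborel \<partial>lborel)"
    by (subst lborel.nn_integral_fst[symmetric]) auto
  finally show ?thesis .
qed

lemma nn_integral_shear_y:
  assumes [measurable]: "f \<in> borel_measurable (borel :: complex measure)"
  shows "(\<integral>\<^sup>+w. f (Complex (Re w) (Im w + t * Re w)) \<partial>lborel) = (\<integral>\<^sup>+w. f w \<partial>lborel)"
proof -
  have "(\<integral>\<^sup>+w. f (Complex (Re w) (Im w + t * Re w)) \<partial>lborel)
     = (\<integral>\<^sup>+x. \<integral>\<^sup>+y. f (Complex x (y + t * x)) \<partial>lborel \<partial>lborel)"
    by (subst nn_integral_complex_pair) auto
  also have "\<dots> = (\<integral>\<^sup>+x. \<integral>\<^sup>+y. f (Complex x y) \<partial>lborel \<partial>lborel)"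
  proof (rule nn_integral_cong)
    fix x :: real
    show "(\<integral>\<^sup>+y. f (Complex x (y + t * x)) \<partial>lborel) = (\<integral>\<^sup>+y. f (Complex x y) \<partial>lborel)"
      using nn_integral_real_affine[of "\<lambda>y. f (Complex x y)" 1 "t * x"]
      by (simp add: add.commute)
  qed
  also have "\<dots> = (\<integral>\<^sup>+w. f w \<partial>lborel)"
    by (subst nn_integral_complex_pair) auto
  finally show ?thesis .
qed

lemma nn_integral_shear_x:
  assumes [measurable]: "f \<in> borel_measurable (borel :: complex measure)"
  shows "(\<integral>\<^sup>+w. f (Complex (Re w + t * Im w) (Im w)) \<partial>lborel) = (\<integral>\<^sup>+w. f w \<partial>lborel)"
proof -
  have "(\<integral>\<^sup>+w. f (Complex (Re w + t * Im w) (Im w)) \<partial>lborel)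
     = (\<integral>\<^sup>+x. \<integral>\<^sup>+y. f (Complex (x + t * y) y) \<partial>lborel \<partial>lborel)"
    by (subst nn_integral_complex_pair) auto
  also have "\<dots> = (\<integral>\<^sup>+y. \<integral>\<^sup>+x. f (Complex (x + t * y) y) \<partial>lborel \<partial>lborel)"
    by (rule lborel_pair.Fubini'[symmetric, of "\<lambda>x y. f (Complex (x + t * y) y)"]) simp
  also have "\<dots> = (\<integral>\<^sup>+y. \<integral>\<^sup>+x. f (Complex x y) \<partial>lborel \<partial>lborel)"
  proof (rule nn_integral_cong)
    fix y :: real
    show "(\<integral>\<^sup>+x. f (Complex (x + t * y) y) \<partial>lborel) = (\<integral>\<^sup>+x. f (Complex x y) \<partial>lborel)"
      using nn_integral_real_affine[of "\<lambda>x. f (Complex x y)" 1 "t * y"]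
      by (simp add: add.commute)
  qed
  also have "\<dots> = (\<integral>\<^sup>+x. \<integral>\<^sup>+y. f (Complex x y) \<partial>lborel \<partial>lborel)"
    by (rule lborel_pair.Fubini'[of "\<lambda>x y. f (Complex x y)"]) simp
  also have "\<dots> = (\<integral>\<^sup>+w. f w \<partial>lborel)"
    by (subst nn_integral_complex_pair) auto
  finally show ?thesis .
qed

lemma nn_integral_scale_diag:
  assumes [measurable]: "f \<in> borel_measurable (borel :: complex measure)" and p: "p \<noteq> 0"
  shows "(\<integral>\<^sup>+w. f (Complex (p * Re w) (Im w / p)) \<partial>lborel) = (\<integral>\<^sup>+w. f w \<partial>lborel)"
proof -
  have "(\<integral>\<^sup>+w. f (Complex (p * Re w) (Im w / p)) \<partial>lborel)
     = (\<integral>\<^sup>+x. \<integral>\<^sup>+y. f (Complex (p * x) (y / p)) \<partial>lborel \<partial>lborel)"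
    by (subst nn_integral_complex_pair) auto
  also have "\<dots> = (\<integral>\<^sup>+x. ennreal \<bar>p\<bar> * \<integral>\<^sup>+y. f (Complex (p * x) y) \<partial>lborel \<partial>lborel)"
  proof (rule nn_integral_cong)
    fix x :: real
    show "(\<integral>\<^sup>+y. f (Complex (p * x) (y / p)) \<partial>lborel) = ennreal \<bar>p\<bar> * (\<integral>\<^sup>+y. f (Complex (p * x) y) \<partial>lborel)"
      using nn_integral_real_affine[of "\<lambda>y. f (Complex (p*x) (y / p))" p 0] p
      by simp
  qed
  also have "\<dots> = ennreal \<bar>p\<bar> * (\<integral>\<^sup>+x. \<integral>\<^sup>+y. f (Complex (p * x) y) \<partial>lborel \<partial>lborel)"
    by (rule nn_integral_cmult) simp
  also have "\<dots> = (\<integral>\<^sup>+x. \<integral>\<^sup>+y. f (Complex x y) \<partial>lborel \<partial>lborel)"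
    using nn_integral_real_affine[of "\<lambda>x. \<integral>\<^sup>+y. f (Complex x y) \<partial>lborel" p 0] p
    by (simp add: mult.commute)
  also have "\<dots> = (\<integral>\<^sup>+w. f w \<partial>lborel)"
    by (subst nn_integral_complex_pair) auto
  finally show ?thesis .
qed

lemma nn_integral_rotate_aux:
  assumes [measurable]: "f \<in> borel_measurable (borel :: complex measure)"
    and c: "cmod c = 1" and p: "Re c \<noteq> 0"
  shows "(\<integral>\<^sup>+w. f (c * w) \<partial>lborel) = (\<integral>\<^sup>+w. f w \<partial>lborel)"
proof -
  define p where "p = Re c"
  define q where "q = Im c"
  have pq: "p\<^sup>2 + q\<^sup>2 = 1" using c unfolding p_def q_def cmod_def
    by (metis real_sqrt_eq_1_iff)
  have p0: "p \<noteq> 0" using assms p_def by simp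
  define g2 where "g2 = (\<lambda>w. f (Complex (Re w) (Im w + (q/p) * Re w)))"
  define g1 where "g1 = (\<lambda>w. g2 (Complex (p * Re w) (Im w / p)))"
  have [measurable]: "g2 \<in> borel_measurable borel" "g1 \<in> borel_measurable borel"
    unfolding g1_def g2_def by measurable
  have eq: "f (c * w) = g1 (Complex (Re w + (- q/p) * Im w) (Im w))" for w
  proof -
    have 1: "c * w = Complex (p * Re w - q * Im w) (q * Re w + p * Im w)"
      by (simp add: p_def q_def complex_eq_iff)
    have 2: "q * Re w + p * Im w = Im w / p + q / p * (p * Re w - q * Im w)"
    proof -
      have "Im w = (p * p + q * q) * Im w" using pq by (simp add: power2_eq_square)
      then have "p * (p * Im w) + q * (q * Im w) = Im w" by (simp add: algebra_simps)
      then show ?thesis using p0 by (simp add: field_simps)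
    qed
    have A: "g1 (Complex (Re w + (- q/p) * Im w) (Im w)) = f (Complex (p*(Re w + (-q/p)*Im w)) (Im w/p + q/p*(p*(Re w + (-q/p)*Im w))))"
      by (simp add: g1_def g2_def)
    have B: "p*(Re w + (-q/p)*Im w) = p*Re w - q*Im w" using p0 by (simp add: field_simps)
    show ?thesis unfolding A B 1 2 ..
  qed
  have "(\<integral>\<^sup>+w. f (c * w) \<partial>lborel) = (\<integral>\<^sup>+w. g1 (Complex (Re w + (- q/p) * Im w) (Im w)) \<partial>lborel)"
    by (simp add: eq)
  also have "\<dots> = (\<integral>\<^sup>+w. g1 w \<partial>lborel)" by (rule nn_integral_shear_x) simp
  also have "\<dots> = (\<integral>\<^sup>+w. g2 w \<partial>lborel)" unfolding g1_def by (rule nn_integral_scale_diag[OF _ p0]) simp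
  also have "\<dots> = (\<integral>\<^sup>+w. f w \<partial>lborel)" unfolding g2_def by (rule nn_integral_shear_y) simp
  finally show ?thesis .
qed

lemma nn_integral_rotate:
  assumes [measurable]: "f \<in> borel_measurable (borel :: complex measure)"
    and c: "cmod c = 1"
  shows "(\<integral>\<^sup>+w. f (c * w) \<partial>lborel) = (\<integral>\<^sup>+w. f w \<partial>lborel)"
proof (cases "Re c = 0")
  case False then show ?thesis using nn_integral_rotate_aux[OF assms] by simp
next
  case True
  define d where "d = Complex (1 / sqrt 2) (1 / sqrt 2)"
  define e where "e = c / d"
  have d1: "cmod d = 1" unfolding d_def cmod_def by (simp add: power_divide)
  have d0: "d \<noteq> 0" using d1 by auto
  have e1: "cmod e = 1" unfolding e_def using c d1 by (simp add: norm_divide)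
  have "Im c \<noteq> 0" using True c by (metis complex_eq_iff norm_zero zero_complex.simps(1,2) zero_neq_one)
  then have eRe: "Re e \<noteq> 0" using True unfolding e_def d_def
    by (simp add: Re_divide power_divide field_simps)
  have "c = e * d" unfolding e_def using d0 by simp
  have "(\<integral>\<^sup>+w. f (c * w) \<partial>lborel) = (\<integral>\<^sup>+w. (\<lambda>v. f (e * v)) (d * w) \<partial>lborel)"
    by (simp add: \<open>c = e * d\<close> mult.assoc)
  also have "\<dots> = (\<integral>\<^sup>+w. f (e * w) \<partial>lborel)"
    by (rule nn_integral_rotate_aux[OF _ d1]) (simp_all add: d_def)
  also have "\<dots> = (\<integral>\<^sup>+w. f w \<partial>lborel)"
    by (rule nn_integral_rotate_aux[OF _ e1 eRe]) simp
  finally show ?thesis .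
qed

lemma emeasure_ball_complex: "r \<ge> 0 \<Longrightarrow> emeasure lborel (ball (c::complex) r) = ennreal (pi * r\<^sup>2)"
  by (simp add: emeasure_ball unit_ball_vol_2)

lemma emeasure_cball_complex: "r \<ge> 0 \<Longrightarrow> emeasure lborel (cball (c::complex) r) = ennreal (pi * r\<^sup>2)"
  by (simp add: emeasure_cball unit_ball_vol_2)

lemma radial_emeasure_Ioi:
  "emeasure (distr (density lborel (indicator (ball (0::complex) 1))) borel cmod) {x<..}
   = ennreal (if x < 0 then pi else if x < 1 then pi - pi * x\<^sup>2 else 0)"
proof -
  have "emeasure (distr (density lborel (indicator (ball (0::complex) 1))) borel cmod) {x<..}
      = emeasure lborel (ball 0 1 \<inter> {w::complex. x < cmod w})"
  proof -
    have m: "{w::complex. x < cmod w} \<in> sets borel" by measurable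
    have mb[measurable]: "ball (0::complex) 1 \<in> sets borel" by simp
    have "emeasure (distr (density lborel (indicator (ball (0::complex) 1))) borel cmod) {x<..}
      = emeasure (density lborel (indicator (ball (0::complex) 1))) {w. x < cmod w}"
      by (subst emeasure_distr) (auto simp: vimage_def)
    also have "\<dots> = (\<integral>\<^sup>+w. indicator (ball 0 1) w * indicator {w. x < cmod w} w \<partial>lborel)"
      using m by (intro emeasure_density) auto
    also have "\<dots> = (\<integral>\<^sup>+w. indicator (ball 0 1 \<inter> {w::complex. x < cmod w}) w \<partial>lborel)"
      by (intro nn_integral_cong) (simp split: split_indicator)
    also have "\<dots> = emeasure lborel (ball 0 1 \<inter> {w::complex. x < cmod w})"
      using m by (intro nn_integral_indicator) auto
    finally show ?thesis .
  qed
  also have "\<dots> = ennreal (if x < 0 then pi else if x < 1 then pi - pi * x\<^sup>2 else 0)"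
  proof (cases "x < 0")
    case True
    then have "ball 0 1 \<inter> {w::complex. x < cmod w} = ball 0 1" using norm_ge_zero by (auto simp: less_le_trans)
    then show ?thesis using True by (simp add: emeasure_ball_complex)
  next
    case False
    show ?thesis
    proof (cases "x < 1")
      case True
      have "ball 0 1 \<inter> {w::complex. x < cmod w} = ball 0 1 - cball 0 x" by auto
      moreover have "emeasure lborel (ball (0::complex) 1 - cball 0 x) = ennreal pi - ennreal (pi * x\<^sup>2)"
        using False True
        by (subst emeasure_Diff) (auto simp: emeasure_ball_complex emeasure_cball_complex)
      moreover have "ennreal pi - ennreal (pi * x\<^sup>2) = ennreal (pi - pi * x\<^sup>2)"
        using False True by (subst ennreal_minus) (auto intro!: mult_left_le power_le_one)
      ultimately show ?thesis using False True by simp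
    next
      case F2: False
      then have "ball 0 1 \<inter> {w::complex. x < cmod w} = {}" by auto
      then show ?thesis using False F2 by simp
    qed
  qed
  finally show ?thesis .
qed

lemma nn_integral_2pir:
  assumes "0 \<le> a" "a \<le> b"
  shows "(\<integral>\<^sup>+r. ennreal (2 * pi * r) * indicator {a..b} r \<partial>lborel) = ennreal (pi * b\<^sup>2 - pi * a\<^sup>2)"
  by (rule nn_integral_FTC_Icc[where F="\<lambda>r. pi * r\<^sup>2"])
     (use assms in \<open>auto intro!: derivative_eq_intros simp: power2_eq_square\<close>)

lemma radial_density_Ioi:
  "emeasure (density lborel (\<lambda>r. ennreal (2 * pi * r) * indicator {0..1} r)) {x<..}
   = ennreal (if x < 0 then pi else if x < 1 then pi - pi * x\<^sup>2 else 0)"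
proof -
  have "emeasure (density lborel (\<lambda>r. ennreal (2 * pi * r) * indicator {0..1} r)) {x<..}
     = (\<integral>\<^sup>+r. (ennreal (2 * pi * r) * indicator {0..1} r) * indicator {x<..} r \<partial>lborel)"
    by (intro emeasure_density) auto
  also have "\<dots> = ennreal (if x < 0 then pi else if x < 1 then pi - pi * x\<^sup>2 else 0)"
  proof (cases "x < 0")
    case True
    have "(\<integral>\<^sup>+r. (ennreal (2 * pi * r) * indicator {0..1} r) * indicator {x<..} r \<partial>lborel)
       = (\<integral>\<^sup>+r. ennreal (2 * pi * r) * indicator {0..1} r \<partial>lborel)"
      using True by (intro nn_integral_cong) (auto split: split_indicator)
    also have "\<dots> = ennreal pi" by (subst nn_integral_2pir) auto
    finally show ?thesis using True by simp
  next
    case False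
    show ?thesis
    proof (cases "x < 1")
      case True
      have "(\<integral>\<^sup>+r. (ennreal (2 * pi * r) * indicator {0..1} r) * indicator {x<..} r \<partial>lborel)
         = (\<integral>\<^sup>+r. ennreal (2 * pi * r) * indicator {x..1} r \<partial>lborel)"
        using AE_lborel_singleton[of x] False
        by (intro nn_integral_cong_AE) (auto elim!: eventually_mono split: split_indicator)
      also have "\<dots> = ennreal (pi - pi * x\<^sup>2)" using False True by (subst nn_integral_2pir) auto
      finally show ?thesis using False True by simp
    next
      case F2: False
      have "(\<integral>\<^sup>+r. (ennreal (2 * pi * r) * indicator {0..1} r) * indicator {x<..} r \<partial>lborel)
         = (\<integral>\<^sup>+(r::real). 0 \<partial>lborel)"
        by (rule nn_integral_cong) (use F2 in \<open>auto split: split_indicator\<close>)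
      then show ?thesis using False F2 by simp
    qed
  qed
  finally show ?thesis .
qed

lemma radial_measure_eq:
  "distr (density lborel (indicator (ball (0::complex) 1))) borel cmod
   = density lborel (\<lambda>r. ennreal (2 * pi * r) * indicator {0..1} r)"
  by (rule measure_eqI_lessThan) (auto simp: radial_emeasure_Ioi radial_density_Ioi)

lemma nn_integral_radial:
  assumes [measurable]: "h \<in> borel_measurable (borel :: real measure)"
  shows "(\<integral>\<^sup>+w. h (cmod w) * indicator (ball (0::complex) 1) w \<partial>lborel)
       = (\<integral>\<^sup>+r. h r * ennreal (2 * pi * r) * indicator {0..1} r \<partial>lborel)"
proof -
  have mb[measurable]: "ball (0::complex) 1 \<in> sets borel" by simp
  have "(\<integral>\<^sup>+w. h (cmod w) * indicator (ball (0::complex) 1) w \<partial>lborel)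
      = (\<integral>\<^sup>+w. h (cmod w) \<partial>density lborel (indicator (ball (0::complex) 1)))"
    by (subst nn_integral_density) (auto simp: mult.commute)
  also have "\<dots> = (\<integral>\<^sup>+r. h r \<partial>distr (density lborel (indicator (ball (0::complex) 1))) borel cmod)"
    by (subst nn_integral_distr) auto
  also have "\<dots> = (\<integral>\<^sup>+r. h r \<partial>density lborel (\<lambda>r. ennreal (2 * pi * r) * indicator {0..1} r))"
    by (simp add: radial_measure_eq)
  also have "\<dots> = (\<integral>\<^sup>+r. h r * ennreal (2 * pi * r) * indicator {0..1} r \<partial>lborel)"
    by (subst nn_integral_density) (auto simp: mult.commute mult.left_commute)
  finally show ?thesis .
qed

lemma borel_measurable_cnj'[measurable (raw)]:
  assumes "f \<in> borel_measurable M"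
  shows "(\<lambda>x. cnj (f x)) \<in> borel_measurable M"
proof -
  have "(\<lambda>x. cnj (f x)) = (\<lambda>x. Complex (Re (f x)) (- Im (f x)))"
    by (auto simp: complex_eq_iff)
  then show ?thesis using assms by simp
qed

lemma arctan_integral_bound:
  assumes a: "a > 0"
  shows "(\<integral>\<^sup>+y. ennreal (2 / (a\<^sup>2 + y\<^sup>2)) * indicator {-1..1} y \<partial>lborel) \<le> ennreal (2 * pi / a)"
proof -
  have "(\<integral>\<^sup>+y. ennreal (2 / (a\<^sup>2 + y\<^sup>2)) * indicator {-1..1} y \<partial>lborel)
      = ennreal (2 * arctan (1 / a) / a - 2 * arctan (-1 / a) / a)"
  proof (rule nn_integral_FTC_Icc[where F="\<lambda>y. 2 * arctan (y / a) / a"])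
    fix y :: real
    have "a\<^sup>2 + y\<^sup>2 > 0" using a by (simp add: add_pos_nonneg)
    have d: "a * (a * (a * a)) + a * (a * (y * y)) = (a * a) * (a * a + y * y)" by (simp add: algebra_simps)
    have "a * (a * (a * a)) + a * (a * (y * y)) > 0" unfolding d using a \<open>a\<^sup>2 + y\<^sup>2 > 0\<close>
      by (simp add: power2_eq_square)
    then show "((\<lambda>y. 2 * arctan (y / a) / a) has_real_derivative 2 / (a\<^sup>2 + y\<^sup>2)) (at y)"
      using a
      by (auto intro!: derivative_eq_intros simp: field_simps power2_eq_square)
  qed (use a in auto)
  also have "\<dots> \<le> ennreal (2 * pi / a)"
  proof (rule ennreal_leI)
    have "arctan (1/a) < pi / 2" by (rule arctan_ubound)
    then have "2 * arctan (1 / a) / a - 2 * arctan (-1 / a) / a = 4 * arctan (1/a) / a"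
      by (simp add: arctan_minus)
    also have "\<dots> \<le> 4 * (pi / 2) / a"
      using a \<open>arctan (1/a) < pi / 2\<close> by (intro divide_right_mono) auto
    finally show "2 * arctan (1 / a) / a - 2 * arctan (-1 / a) / a \<le> 2 * pi / a" by simp
  qed
  finally show ?thesis .
qed

lemma cmod_1_minus_rho_sq:
  fixes e :: complex and \<rho> :: real
  assumes "cmod e = 1"
  shows "(cmod (1 - of_real \<rho> * e))\<^sup>2 = (1 - \<rho>)\<^sup>2 + 2 * \<rho> * (1 - Re e)"
proof -
  have "(Re e)\<^sup>2 + (Im e)\<^sup>2 = 1" using assms by (simp add: cmod_power2[symmetric])
  have "(cmod (1 - of_real \<rho> * e))\<^sup>2 = (1 - \<rho> * Re e)\<^sup>2 + (\<rho> * Im e)\<^sup>2"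
    by (simp add: cmod_power2)
  also have "\<dots> = 1 - 2 * \<rho> * Re e + \<rho>\<^sup>2 * ((Re e)\<^sup>2 + (Im e)\<^sup>2)"
    by (simp add: power2_eq_square algebra_simps)
  also have "\<dots> = (1 - \<rho>)\<^sup>2 + 2 * \<rho> * (1 - Re e)"
    using \<open>(Re e)\<^sup>2 + (Im e)\<^sup>2 = 1\<close> by (simp add: power2_eq_square algebra_simps)
  finally show ?thesis .
qed

lemma psi_bound:
  fixes \<rho> :: real
  assumes "0 \<le> \<rho>" "\<rho> < 1"
  shows "(\<integral>\<^sup>+c. indicator (ball 0 1 - {0}) c * ennreal (1 / (cmod (1 - of_real \<rho> * sgn c))\<^sup>2) \<partial>lborel)
         \<le> ennreal (4 * pi / (1 - \<rho>))"
proof (cases "\<rho> \<le> 1/2")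
  case True
  have "(\<integral>\<^sup>+c. indicator (ball 0 1 - {0}) c * ennreal (1 / (cmod (1 - of_real \<rho> * sgn c))\<^sup>2) \<partial>lborel)
      \<le> (\<integral>\<^sup>+c. ennreal 4 * indicator (ball (0::complex) 1) c \<partial>lborel)"
  proof (rule nn_integral_mono)
    fix c :: complex
    show "indicator (ball 0 1 - {0}) c * ennreal (1 / (cmod (1 - of_real \<rho> * sgn c))\<^sup>2)
          \<le> ennreal 4 * indicator (ball 0 1) c"
    proof (cases "c \<in> ball 0 1 - {0}")
      case True
      have "cmod (of_real \<rho> * sgn c) = \<rho>" using True \<open>0 \<le> \<rho>\<close> by (simp add: norm_mult norm_sgn)
      then have "cmod (1 - of_real \<rho> * sgn c) \<ge> 1 - \<rho>"
        by (metis norm_one norm_triangle_ineq2)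
      then have h: "cmod (1 - of_real \<rho> * sgn c) \<ge> 1/2" using \<open>\<rho> \<le> 1/2\<close> by linarith
      then have "(cmod (1 - of_real \<rho> * sgn c))\<^sup>2 \<ge> (1/2)\<^sup>2"
        by (intro power_mono) auto
      then have "1 / (cmod (1 - of_real \<rho> * sgn c))\<^sup>2 \<le> 4"
        by (simp add: field_simps power2_eq_square)
      then have "ennreal (1 / (cmod (1 - of_real \<rho> * sgn c))\<^sup>2) \<le> ennreal 4" by (rule ennreal_leI)
      then show ?thesis using True by simp
    qed auto
  qed
  also have "\<dots> = ennreal 4 * ennreal pi"
    by (subst nn_integral_cmult_indicator) (auto simp: emeasure_ball_complex)
  also have "\<dots> \<le> ennreal (4 * pi / (1 - \<rho>))"
  proof -
    have "4 * pi \<le> 4 * pi / (1 - \<rho>)" using assms by (simp add: field_simps)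
    then have "ennreal (4 * pi) \<le> ennreal (4 * pi / (1 - \<rho>))" by (rule ennreal_leI)
    moreover have "ennreal 4 * ennreal pi = ennreal (4 * pi)" by (simp add: ennreal_mult)
    ultimately show ?thesis by simp
  qed
  finally show ?thesis .
next
  case False
  define a where "a = 1 - \<rho>"
  have a: "a > 0" using assms by (simp add: a_def)
  have "(\<integral>\<^sup>+c. indicator (ball 0 1 - {0}) c * ennreal (1 / (cmod (1 - of_real \<rho> * sgn c))\<^sup>2) \<partial>lborel)
      \<le> (\<integral>\<^sup>+c. indicator {-1..1} (Re c) * (ennreal (2 / (a\<^sup>2 + (Im c)\<^sup>2)) * indicator {-1..1} (Im c)) \<partial>lborel)"
  proof (rule nn_integral_mono)
    fix c :: complex
    show "indicator (ball 0 1 - {0}) c * ennreal (1 / (cmod (1 - of_real \<rho> * sgn c))\<^sup>2)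
          \<le> indicator {-1..1} (Re c) * (ennreal (2 / (a\<^sup>2 + (Im c)\<^sup>2)) * indicator {-1..1} (Im c))"
    proof (cases "c \<in> ball 0 1 - {0}")
      case True
      define e where "e = sgn c"
      have c0: "c \<noteq> 0" and c1: "cmod c < 1" using True by auto
      have e1: "cmod e = 1" using c0 by (simp add: e_def norm_sgn)
      have Ime: "Im e = Im c / cmod c" by (simp add: e_def sgn_div_norm divide_inverse mult.commute)
      have "\<bar>Im c\<bar> \<le> \<bar>Im e\<bar>"
      proof -
        have "cmod c * \<bar>Im c\<bar> \<le> 1 * \<bar>Im c\<bar>" using c1 by (intro mult_right_mono) auto
        then have "\<bar>Im c\<bar> * 1 \<le> \<bar>Im c\<bar> / cmod c"
          using c0 by (simp add: field_simps)
        then show ?thesis by (simp add: Ime abs_div)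
      qed
      then have "(Im c)\<^sup>2 \<le> (Im e)\<^sup>2" by (simp add: abs_le_square_iff)
      have ree: "(Re e)\<^sup>2 + (Im e)\<^sup>2 = 1" using e1 by (simp add: cmod_power2[symmetric])
      have "Re e \<le> 1" using e1 abs_Re_le_cmod[of e] by simp
      have "(Im e)\<^sup>2 \<le> 2 * (1 - Re e)"
      proof -
        have "(Im e)\<^sup>2 = (1 - Re e) * (1 + Re e)" using ree by (simp add: algebra_simps power2_eq_square)
        also have "\<dots> \<le> (1 - Re e) * 2" using \<open>Re e \<le> 1\<close> by (intro mult_left_mono) auto
        finally show ?thesis by simp
      qed
      have sq: "(cmod (1 - of_real \<rho> * e))\<^sup>2 = a\<^sup>2 + 2 * \<rho> * (1 - Re e)"
        using cmod_1_minus_rho_sq[OF e1, of \<rho>] by (simp add: a_def)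
      have "2 * \<rho> * (1 - Re e) \<ge> 1 - Re e" using False \<open>Re e \<le> 1\<close>
        by (intro mult_right_mono[of 1 "2*\<rho>", simplified]) auto
      moreover obtain T where T: "T = 2 * \<rho> * (1 - Re e)" by blast
      moreover obtain Q where Q: "Q = (cmod (1 - of_real \<rho> * e))\<^sup>2" by blast
      moreover obtain A2 where A2: "A2 = a\<^sup>2" by blast
      moreover obtain I1 where I1: "I1 = (Im c)\<^sup>2" by blast
      moreover obtain I2 where I2: "I2 = (Im e)\<^sup>2" by blast
      moreover obtain R where R: "R = 1 - Re e" by blast
      ultimately have "R \<le> T" "Q = A2 + T" "I1 \<le> I2" "I2 \<le> 2 * R" "0 \<le> A2"
        using sq \<open>(Im c)\<^sup>2 \<le> (Im e)\<^sup>2\<close> \<open>(Im e)\<^sup>2 \<le> 2 * (1 - Re e)\<close> by auto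
      then have "A2 + I1 \<le> 2 * Q" by linarith
      then have low0: "a\<^sup>2 + (Im c)\<^sup>2 \<le> 2 * (cmod (1 - of_real \<rho> * e))\<^sup>2"
        using A2 I1 Q by simp
      then have low: "(cmod (1 - of_real \<rho> * e))\<^sup>2 \<ge> (a\<^sup>2 + (Im c)\<^sup>2) / 2" by simp
      have pos: "(a\<^sup>2 + (Im c)\<^sup>2) / 2 > 0" using a by (simp add: add_pos_nonneg)
      have "1 / (cmod (1 - of_real \<rho> * e))\<^sup>2 \<le> 1 / ((a\<^sup>2 + (Im c)\<^sup>2) / 2)"
        by (rule divide_left_mono[OF low]) (use pos low in \<open>auto intro!: mult_pos_pos\<close>)
      also have "\<dots> = 2 / (a\<^sup>2 + (Im c)\<^sup>2)" by simp
      finally have bnd: "1 / (cmod (1 - of_real \<rho> * sgn c))\<^sup>2 \<le> 2 / (a\<^sup>2 + (Im c)\<^sup>2)"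
        by (simp add: e_def)
      have "\<bar>Re c\<bar> \<le> 1" "\<bar>Im c\<bar> \<le> 1" using c1 abs_Re_le_cmod[of c] abs_Im_le_cmod[of c] by auto
      then have i1: "indicator {-1..1} (Re c) = (1::ennreal)" "indicator {-1..1} (Im c) = (1::ennreal)"
        by (auto simp: indicator_def abs_le_iff)
      have i2: "indicator (ball 0 1 - {0}) c = (1::ennreal)" using True by simp
      show ?thesis unfolding i1 i2 using bnd by (simp add: ennreal_leI)
    qed auto
  qed
  also have "\<dots> = (\<integral>\<^sup>+(x::real). \<integral>\<^sup>+y. indicator {-1..1} x * (ennreal (2 / (a\<^sup>2 + y\<^sup>2)) * indicator {-1..1} y) \<partial>lborel \<partial>lborel)"
    by (subst nn_integral_complex_pair) auto
  also have "\<dots> = (\<integral>\<^sup>+(x::real). indicator {-1..1} x * (\<integral>\<^sup>+y. ennreal (2 / (a\<^sup>2 + y\<^sup>2)) * indicator {-1..1} y \<partial>lborel) \<partial>lborel)"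
    by (subst nn_integral_cmult) auto
  also have "\<dots> = (\<integral>\<^sup>+y. ennreal (2 / (a\<^sup>2 + y\<^sup>2)) * indicator {-1..1} y \<partial>lborel) * 2"
  proof -
    define K where "K = (\<integral>\<^sup>+y. ennreal (2 / (a\<^sup>2 + y\<^sup>2)) * indicator {-1..1} y \<partial>lborel)"
    have "(\<integral>\<^sup>+(x::real). indicator {-1..1} x * K \<partial>lborel) = (\<integral>\<^sup>+(x::real). K * indicator {-1..1} x \<partial>lborel)"
      by (simp add: mult.commute)
    also have "\<dots> = K * emeasure lborel {-1..(1::real)}"
      by (rule nn_integral_cmult_indicator) simp
    finally show ?thesis unfolding K_def by simp
  qed
  also have "\<dots> \<le> ennreal (2 * pi / a) * 2"
    by (intro mult_right_mono arctan_integral_bound a) auto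
  also have "\<dots> = ennreal (4 * pi / (1 - \<rho>))"
  proof -
    have e1: "ennreal (2 * pi / a * 2) = ennreal (2 * pi / a) * ennreal 2"
      using a by (intro ennreal_mult) auto
    have "2 * pi / a * 2 = 4 * pi / (1 - \<rho>)" by (simp add: a_def)
    then show ?thesis using e1 by simp
  qed
  finally show ?thesis .
qed

lemma nn_integral_flip01:
  assumes [measurable]: "g \<in> borel_measurable (borel :: real measure)"
  shows "(\<integral>\<^sup>+r. g (1 - r) * indicator {0..1} r \<partial>lborel) = (\<integral>\<^sup>+u. g u * indicator {0..1} u \<partial>lborel)"
proof -
  have "(\<integral>\<^sup>+u. g u * indicator {0..1} u \<partial>lborel)
      = ennreal \<bar>-1\<bar> * (\<integral>\<^sup>+r. g (1 + (-1) * r) * indicator {0..1} (1 + (-1) * r) \<partial>lborel)"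
    by (rule nn_integral_real_affine) auto
  also have "\<dots> = (\<integral>\<^sup>+r. g (1 - r) * indicator {0..1} r \<partial>lborel)"
    by (auto intro!: nn_integral_cong split: split_indicator)
  finally show ?thesis by simp
qed

lemma radial_R1:
  fixes s :: real assumes s: "1 < s"
  shows "(\<integral>\<^sup>+w. ennreal ((1 - cmod w) powr (s - 2)) * indicator (ball (0::complex) 1) w \<partial>lborel)
         \<le> ennreal (2 * pi / (s - 1))"
proof -
  have "(\<integral>\<^sup>+w. ennreal ((1 - cmod w) powr (s - 2)) * indicator (ball (0::complex) 1) w \<partial>lborel)
      = (\<integral>\<^sup>+r. ennreal ((1 - r) powr (s - 2)) * ennreal (2 * pi * r) * indicator {0..1} r \<partial>lborel)"
    by (rule nn_integral_radial) simp
  also have "\<dots> \<le> (\<integral>\<^sup>+r. ennreal (2 * pi) * (ennreal ((1 - r) powr (s - 2)) * indicator {0..1} r) \<partial>lborel)"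
  proof (rule nn_integral_mono)
    fix r :: real
    show "ennreal ((1 - r) powr (s - 2)) * ennreal (2 * pi * r) * indicator {0..1} r
        \<le> ennreal (2 * pi) * (ennreal ((1 - r) powr (s - 2)) * indicator {0..1} r)"
    proof (cases "r \<in> {0..1}")
      case True
      then have "ennreal (2 * pi * r) \<le> ennreal (2 * pi)" by (intro ennreal_leI) auto
      then have "ennreal (2 * pi * r) * ennreal ((1 - r) powr (s - 2)) \<le> ennreal (2 * pi) * ennreal ((1 - r) powr (s - 2))"
        by (rule mult_right_mono) simp
      then show ?thesis using True by (simp add: mult.commute mult.left_commute)
    qed simp
  qed
  also have "\<dots> = ennreal (2 * pi) * (\<integral>\<^sup>+r. ennreal ((1 - r) powr (s - 2)) * indicator {0..1} r \<partial>lborel)"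
    by (rule nn_integral_cmult) simp
  also have "(\<integral>\<^sup>+r. ennreal ((1 - r) powr (s - 2)) * indicator {0..1} r \<partial>lborel)
      = (\<integral>\<^sup>+u. ennreal (u powr (s - 2)) * indicator {0..1} u \<partial>lborel)"
    using nn_integral_flip01[of "\<lambda>u. ennreal (u powr (s - 2))"] by simp
  also have "\<dots> = ennreal (1 / (s - 1))"
  proof -
    have "((\<lambda>u. u powr (s - 2)) has_integral (1 powr (s - 2 + 1) / (s - 2 + 1))) {0..1}"
      by (rule has_integral_powr_from_0) (use s in auto)
    then have "(\<integral>\<^sup>+u. ennreal (u powr (s - 2)) * indicator {0..1} u \<partial>lborel) = ennreal (1 powr (s - 2 + 1) / (s - 2 + 1))"
      by (intro nn_integral_has_integral_lebesgue') auto
    then show ?thesis by simp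
  qed
  also have "ennreal (2 * pi) * ennreal (1 / (s - 1)) = ennreal (2 * pi / (s - 1))"
    using s by (simp add: ennreal_mult[symmetric])
  finally show ?thesis by simp
qed

lemma radial_R2:
  fixes a \<delta> :: real assumes a: "0 < a" and d: "0 < \<delta>" "\<delta> \<le> 1"
  shows "(\<integral>\<^sup>+w. ennreal ((1 - cmod w) powr (-1 - a)) * indicator {w::complex. cmod w < 1 \<and> \<delta> < 1 - cmod w} w \<partial>lborel)
         \<le> ennreal (2 * pi * \<delta> powr (-a) / a)"
proof -
  have "(\<integral>\<^sup>+w. ennreal ((1 - cmod w) powr (-1 - a)) * indicator {w::complex. cmod w < 1 \<and> \<delta> < 1 - cmod w} w \<partial>lborel)
      = (\<integral>\<^sup>+w. (ennreal ((1 - cmod w) powr (-1 - a)) * indicator {r. \<delta> < 1 - r} (cmod w)) * indicator (ball (0::complex) 1) w \<partial>lborel)"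
    by (intro nn_integral_cong) (auto split: split_indicator)
  also have "\<dots> = (\<integral>\<^sup>+r. (ennreal ((1 - r) powr (-1 - a)) * indicator {r. \<delta> < 1 - r} r) * ennreal (2 * pi * r) * indicator {0..1} r \<partial>lborel)"
    by (rule nn_integral_radial) simp
  also have "\<dots> \<le> (\<integral>\<^sup>+r. ennreal (2 * pi) * (ennreal ((1 - r) powr (-1 - a)) * indicator {\<delta>..1} (1 - r) * indicator {0..1} r) \<partial>lborel)"
  proof (rule nn_integral_mono)
    fix r :: real
    show "(ennreal ((1 - r) powr (-1 - a)) * indicator {r. \<delta> < 1 - r} r) * ennreal (2 * pi * r) * indicator {0..1} r
        \<le> ennreal (2 * pi) * (ennreal ((1 - r) powr (-1 - a)) * indicator {\<delta>..1} (1 - r) * indicator {0..1} r)"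
    proof (cases "r \<in> {0..1} \<and> \<delta> < 1 - r")
      case True
      then have "ennreal (2 * pi * r) \<le> ennreal (2 * pi)" by (intro ennreal_leI) auto
      then have "ennreal (2 * pi * r) * ennreal ((1 - r) powr (-1 - a)) \<le> ennreal (2 * pi) * ennreal ((1 - r) powr (-1 - a))"
        by (rule mult_right_mono) simp
      then show ?thesis using True by (simp add: mult.commute mult.left_commute indicator_def)
    qed (auto simp: indicator_def)
  qed
  also have "\<dots> = ennreal (2 * pi) * (\<integral>\<^sup>+r. ennreal ((1 - r) powr (-1 - a)) * indicator {\<delta>..1} (1 - r) * indicator {0..1} r \<partial>lborel)"
    by (rule nn_integral_cmult) simp
  also have "(\<integral>\<^sup>+r. ennreal ((1 - r) powr (-1 - a)) * indicator {\<delta>..1} (1 - r) * indicator {0..1} r \<partial>lborel)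
      = (\<integral>\<^sup>+u. ennreal (u powr (-1 - a)) * indicator {\<delta>..1} u * indicator {0..1} u \<partial>lborel)"
    using nn_integral_flip01[of "\<lambda>u. ennreal (u powr (-1 - a)) * indicator {\<delta>..1} u"] by simp
  also have "\<dots> = (\<integral>\<^sup>+u. ennreal (u powr (-1 - a)) * indicator {\<delta>..1} u \<partial>lborel)"
    using d by (intro nn_integral_cong) (auto split: split_indicator)
  also have "\<dots> = ennreal ((- (1 powr (-a)) / a) - (- (\<delta> powr (-a)) / a))"
  proof (rule nn_integral_FTC_Icc[where F="\<lambda>u. - (u powr (-a)) / a"])
    fix u assume u: "u \<in> {\<delta>..1}"
    then have "u > 0" using d by auto
    then show "((\<lambda>u. - (u powr (-a)) / a) has_real_derivative u powr (-1 - a)) (at u)"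
      using a by (auto intro!: derivative_eq_intros simp: field_simps powr_diff simp flip: powr_add)
  qed (use d in auto)
  also have "\<dots> \<le> ennreal (\<delta> powr (-a) / a)"
    using a by (intro ennreal_leI) (simp add: field_simps)
  also have "ennreal (2 * pi) * ennreal (\<delta> powr (-a) / a) = ennreal (2 * pi * \<delta> powr (-a) / a)"
    using a by (simp add: ennreal_mult[symmetric])
  finally show ?thesis by (simp add: mult_left_mono)
qed

lemma psi_general:
  fixes q :: complex
  assumes q: "cmod q < 1"
  shows "(\<integral>\<^sup>+c. indicator (ball 0 1 - {0}) c * ennreal (1 / (cmod (1 - q * cnj (sgn c)))\<^sup>2) \<partial>lborel)
         \<le> ennreal (4 * pi / (1 - cmod q))"
proof -
  define \<rho> where "\<rho> = cmod q"
  define \<omega> where "\<omega> = (if q = 0 then 1 else sgn q)"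
  have \<omega>1: "cmod \<omega> = 1" by (simp add: \<omega>_def norm_sgn)
  have q\<omega>: "q = of_real \<rho> * \<omega>" by (simp add: \<rho>_def \<omega>_def scaleR_conv_of_real sgn_div_norm)
  define F where "F = (\<lambda>c. indicator (ball 0 1 - {0}) c * ennreal (1 / (cmod (1 - of_real \<rho> * sgn c))\<^sup>2))"
  have [measurable]: "F \<in> borel_measurable borel" unfolding F_def by measurable
  have cw: "cmod (cnj \<omega>) = 1" using \<omega>1 by simp
  have eq: "indicator (ball 0 1 - {0}) c * ennreal (1 / (cmod (1 - q * cnj (sgn c)))\<^sup>2) = F (cnj \<omega> * c)" for c
  proof -
    have "sgn (cnj \<omega> * c) = cnj \<omega> * sgn c"
      using cw by (simp add: sgn_mult sgn_div_norm norm_mult)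
    moreover have "cmod (1 - of_real \<rho> * (cnj \<omega> * sgn c)) = cmod (1 - q * cnj (sgn c))"
    proof -
      have "1 - of_real \<rho> * (cnj \<omega> * sgn c) = cnj (1 - q * cnj (sgn c))" by (simp add: q\<omega>)
      then show ?thesis by (metis complex_mod_cnj)
    qed
    moreover have "(cnj \<omega> * c \<in> ball 0 1 - {0}) = (c \<in> ball 0 1 - {0})"
      using cw by (auto simp: norm_mult)
    ultimately show ?thesis unfolding F_def by (simp add: indicator_def)
  qed
  have "(\<integral>\<^sup>+c. indicator (ball 0 1 - {0}) c * ennreal (1 / (cmod (1 - q * cnj (sgn c)))\<^sup>2) \<partial>lborel)
      = (\<integral>\<^sup>+c. F (cnj \<omega> * c) \<partial>lborel)" by (simp add: eq)
  also have "\<dots> = (\<integral>\<^sup>+c. F c \<partial>lborel)" by (rule nn_integral_rotate[OF _ cw]) simp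
  also have "\<dots> \<le> ennreal (4 * pi / (1 - \<rho>))" unfolding F_def
    by (rule psi_bound) (use q in \<open>auto simp: \<rho>_def\<close>)
  finally show ?thesis by (simp add: \<rho>_def)
qed

lemma inner_bound:
  fixes s :: real and x :: complex
  assumes s: "1 < s" and x: "cmod x < 1"
  shows "(\<integral>\<^sup>+w. ennreal ((1 - cmod w) powr (s - 2) / (cmod (1 - x * cnj w))\<^sup>2) * indicator (ball 0 1) w \<partial>lborel)
         \<le> ennreal (8 * pi / ((s - 1) * (1 - cmod x)))"
proof -
  define E where "E = ball (0::complex) 1 - {0}"
  define G where "G = (\<lambda>w. ennreal ((1 - cmod w) powr (s - 2) / (cmod (1 - x * cnj w))\<^sup>2) * indicator (ball (0::complex) 1) w)"
  have [measurable]: "G \<in> borel_measurable borel" unfolding G_def by measurable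
  have [measurable]: "E \<in> sets borel" unfolding E_def by measurable
  have mE: "emeasure lborel E = ennreal pi"
  proof -
    have "emeasure lborel E = emeasure lborel (ball (0::complex) 1)"
      unfolding E_def by (rule emeasure_Diff_null_set) auto
    then show ?thesis by (simp add: emeasure_ball_complex)
  qed
  have xb: "1 - cmod x > 0" using x by simp
  define B where "B = 4 * pi / (1 - cmod x)"
  have "ennreal pi * (\<integral>\<^sup>+w. G w \<partial>lborel) = (\<integral>\<^sup>+c. (\<integral>\<^sup>+w. G w \<partial>lborel) * indicator E c \<partial>lborel)"
    by (subst nn_integral_cmult_indicator) (auto simp: mE mult.commute)
  also have "\<dots> = (\<integral>\<^sup>+c. (\<integral>\<^sup>+w. indicator E c * G (sgn c * w) \<partial>lborel) \<partial>lborel)"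
  proof (rule nn_integral_cong)
    fix c :: complex
    show "(\<integral>\<^sup>+w. G w \<partial>lborel) * indicator E c = (\<integral>\<^sup>+w. indicator E c * G (sgn c * w) \<partial>lborel)"
    proof (cases "c \<in> E")
      case True
      then have "cmod (sgn c) = 1" by (simp add: E_def norm_sgn)
      then have "(\<integral>\<^sup>+w. G (sgn c * w) \<partial>lborel) = (\<integral>\<^sup>+w. G w \<partial>lborel)"
        by (intro nn_integral_rotate) simp
      then show ?thesis using True by simp
    qed simp
  qed
  also have "\<dots> = (\<integral>\<^sup>+w. (\<integral>\<^sup>+c. indicator E c * G (sgn c * w) \<partial>lborel) \<partial>lborel)"
    by (rule lborel_pair.Fubini'[symmetric, of "\<lambda>c w. indicator E c * G (sgn c * w)"]) simp
  also have "\<dots> \<le> (\<integral>\<^sup>+w. ennreal B * (ennreal ((1 - cmod w) powr (s - 2)) * indicator (ball (0::complex) 1) w) \<partial>lborel)"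
  proof (rule nn_integral_mono)
    fix w :: complex
    show "(\<integral>\<^sup>+c. indicator E c * G (sgn c * w) \<partial>lborel)
          \<le> ennreal B * (ennreal ((1 - cmod w) powr (s - 2)) * indicator (ball 0 1) w)"
    proof (cases "w \<in> ball 0 1")
      case False
      have "(\<integral>\<^sup>+c. indicator E c * G (sgn c * w) \<partial>lborel) = (\<integral>\<^sup>+(c::complex). 0 \<partial>lborel)"
      proof (rule nn_integral_cong)
        fix c :: complex
        show "indicator E c * G (sgn c * w) = 0"
        proof (cases "c \<in> E")
          case True
          then have "cmod (sgn c * w) = cmod w" by (simp add: E_def norm_mult norm_sgn)
          then show ?thesis using False by (simp add: G_def)
        qed simp
      qed
      then show ?thesis by simp
    next
      case True
      define q where "q = x * cnj w"
      have "cmod q \<le> cmod x" using True by (simp add: q_def norm_mult mult_left_le)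
      then have q1: "cmod q < 1" using x by simp
      have "(\<integral>\<^sup>+c. indicator E c * G (sgn c * w) \<partial>lborel)
          = (\<integral>\<^sup>+c. ennreal ((1 - cmod w) powr (s - 2)) *
               (indicator (ball 0 1 - {0}) c * ennreal (1 / (cmod (1 - q * cnj (sgn c)))\<^sup>2)) \<partial>lborel)"
      proof (rule nn_integral_cong)
        fix c :: complex
        show "indicator E c * G (sgn c * w) = ennreal ((1 - cmod w) powr (s - 2)) *
               (indicator (ball 0 1 - {0}) c * ennreal (1 / (cmod (1 - q * cnj (sgn c)))\<^sup>2))"
        proof (cases "c \<in> E")
          case cE: True
          then have n: "cmod (sgn c * w) = cmod w" by (simp add: E_def norm_mult norm_sgn)
          have e: "x * cnj (sgn c * w) = q * cnj (sgn c)" by (simp add: q_def)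
          have inb: "sgn c * w \<in> ball 0 1" using n True by simp
          have "G (sgn c * w) = ennreal ((1 - cmod (sgn c * w)) powr (s - 2) / (cmod (1 - x * cnj (sgn c * w)))\<^sup>2)"
            using inb by (simp add: G_def)
          also have "\<dots> = ennreal ((1 - cmod w) powr (s - 2) / (cmod (1 - q * cnj (sgn c)))\<^sup>2)"
            unfolding n e ..
          also have "\<dots> = ennreal ((1 - cmod w) powr (s - 2)) * ennreal (1 / (cmod (1 - q * cnj (sgn c)))\<^sup>2)"
            by (simp add: ennreal_mult[symmetric] divide_inverse)
          finally have "G (sgn c * w) = ennreal ((1 - cmod w) powr (s - 2)) * ennreal (1 / (cmod (1 - q * cnj (sgn c)))\<^sup>2)" .
          then show ?thesis using cE by (simp add: E_def)
        qed (simp add: E_def)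
      qed
      also have "\<dots> = ennreal ((1 - cmod w) powr (s - 2)) *
               (\<integral>\<^sup>+c. indicator (ball 0 1 - {0}) c * ennreal (1 / (cmod (1 - q * cnj (sgn c)))\<^sup>2) \<partial>lborel)"
        by (rule nn_integral_cmult) measurable
      also have "\<dots> \<le> ennreal ((1 - cmod w) powr (s - 2)) * ennreal (4 * pi / (1 - cmod q))"
        by (intro mult_left_mono psi_general q1) simp
      also have "\<dots> \<le> ennreal ((1 - cmod w) powr (s - 2)) * ennreal B"
      proof (intro mult_left_mono ennreal_leI)
        show "4 * pi / (1 - cmod q) \<le> B" unfolding B_def
          using \<open>cmod q \<le> cmod x\<close> xb by (intro divide_left_mono) auto
      qed simp
      finally show ?thesis using True by (simp add: mult.commute)
    qed
  qed
  also have "\<dots> = ennreal B * (\<integral>\<^sup>+w. ennreal ((1 - cmod w) powr (s - 2)) * indicator (ball (0::complex) 1) w \<partial>lborel)"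
    by (rule nn_integral_cmult) measurable
  also have "\<dots> \<le> ennreal B * ennreal (2 * pi / (s - 1))"
    by (intro mult_left_mono radial_R1 s) simp
  also have "\<dots> = ennreal pi * ennreal (8 * pi / ((s - 1) * (1 - cmod x)))"
  proof -
    have B0: "B \<ge> 0" using xb by (simp add: B_def)
    have p0: "2 * pi / (s - 1) \<ge> 0" "8 * pi / ((s - 1) * (1 - cmod x)) \<ge> 0" using s xb by auto
    have "B * (2 * pi / (s - 1)) = pi * (8 * pi / ((s - 1) * (1 - cmod x)))"
      using s xb by (simp add: B_def field_simps)
    then show ?thesis using B0 p0 by (simp add: ennreal_mult[symmetric])
  qed
  finally have "ennreal pi * (\<integral>\<^sup>+w. G w \<partial>lborel) \<le> ennreal pi * ennreal (8 * pi / ((s - 1) * (1 - cmod x)))" .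
  then have "(\<integral>\<^sup>+w. G w \<partial>lborel) \<le> ennreal (8 * pi / ((s - 1) * (1 - cmod x)))"
    by (subst (asm) ennreal_mult_le_mult_iff) auto
  then show ?thesis by (simp add: G_def)
qed




lemma mobius_norm_identity:
  fixes z x :: complex
  shows "(cmod (1 - cnj z * x))\<^sup>2 - (cmod (z - x))\<^sup>2 = (1 - (cmod z)\<^sup>2) * (1 - (cmod x)\<^sup>2)"
  unfolding cmod_power2 by (simp add: power2_eq_square algebra_simps)

lemma one_minus_cnj_pos:
  fixes z x :: complex
  assumes "cmod z < 1" "cmod x < 1"
  shows "cmod (1 - cnj z * x) \<ge> 1 - cmod z * cmod x" "1 - cmod z * cmod x > 0"
proof -
  have "cmod (cnj z * x) = cmod z * cmod x" by (simp add: norm_mult)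
  then show "cmod (1 - cnj z * x) \<ge> 1 - cmod z * cmod x"
    by (metis norm_one norm_triangle_ineq2)
  have "cmod z * cmod x < 1 * 1" using assms by (intro mult_strict_mono') auto
  then show "1 - cmod z * cmod x > 0" by simp
qed

lemma mobius_facts:
  fixes z x :: complex
  assumes z: "cmod z < 1" and x: "cmod x < 1"
  shows "cmod (mobius z x) < 1"
    and "1 - (cmod (mobius z x))\<^sup>2 = (1 - (cmod z)\<^sup>2) * (1 - (cmod x)\<^sup>2) / (cmod (1 - cnj z * x))\<^sup>2"
proof -
  define D where "D = cmod (1 - cnj z * x)"
  have D: "D > 0" using one_minus_cnj_pos[OF z x] unfolding D_def by linarith
  have m2: "(cmod (mobius z x))\<^sup>2 = (cmod (z - x))\<^sup>2 / D\<^sup>2"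
    by (simp add: mobius_def D_def norm_divide power_divide)
  have id: "D\<^sup>2 - (cmod (z - x))\<^sup>2 = (1 - (cmod z)\<^sup>2) * (1 - (cmod x)\<^sup>2)"
    unfolding D_def by (rule mobius_norm_identity)
  show eq: "1 - (cmod (mobius z x))\<^sup>2 = (1 - (cmod z)\<^sup>2) * (1 - (cmod x)\<^sup>2) / (cmod (1 - cnj z * x))\<^sup>2"
    unfolding m2 D_def[symmetric] using D id by (simp add: field_simps)
  have "(cmod z)\<^sup>2 < 1" "(cmod x)\<^sup>2 < 1" using z x by (simp_all add: power_less_one_iff abs_less_iff)
  then have "(1 - (cmod z)\<^sup>2) * (1 - (cmod x)\<^sup>2) / (cmod (1 - cnj z * x))\<^sup>2 > 0"
    using D by (simp add: D_def)
  then have "(cmod (mobius z x))\<^sup>2 < 1" using eq by linarith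
  then show "cmod (mobius z x) < 1" by (simp add: power_less_one_iff abs_less_iff)
qed

lemma Tz_pos: assumes "cmod z < 1" "cmod x < 1" shows "Tz z x > 0"
  using mobius_facts(1)[OF assms] by (simp add: Tz_def divide_pos_pos add_pos_nonneg)

lemma Tz_upper:
  assumes z: "cmod z < 1" and x: "cmod x < 1"
  shows "Tz z x \<le> 2 * (1 + cmod z) / (1 - cmod z) * (1 - cmod x)"
proof -
  define m where "m = cmod (mobius z x)"
  have m1: "m < 1" "m \<ge> 0" using mobius_facts(1)[OF z x] by (auto simp: m_def)
  have "Tz z x = (1 - m) / (1 + m)" by (simp add: Tz_def m_def)
  also have "\<dots> \<le> 1 - m" using m1 by (simp add: field_simps mult_left_le)
  also have "\<dots> \<le> 1 - m\<^sup>2" using m1 by (simp add: power2_eq_square mult_left_le_one_le)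
  also have "\<dots> = (1 - (cmod z)\<^sup>2) * (1 - (cmod x)\<^sup>2) / (cmod (1 - cnj z * x))\<^sup>2"
    unfolding m_def by (rule mobius_facts(2)[OF z x])
  also have "\<dots> \<le> (1 - (cmod z)\<^sup>2) * (1 - (cmod x)\<^sup>2) / (1 - cmod z)\<^sup>2"
  proof (rule divide_left_mono)
    have "cmod z * cmod x \<le> cmod z" using x by (simp add: mult_left_le)
    then have "1 - cmod z \<le> cmod (1 - cnj z * x)" using one_minus_cnj_pos(1)[OF z x] by linarith
    then show "(1 - cmod z)\<^sup>2 \<le> (cmod (1 - cnj z * x))\<^sup>2" using z by (intro power_mono) auto
    have "(cmod z)\<^sup>2 \<le> 1" "(cmod x)\<^sup>2 \<le> 1" using z x by (simp_all add: power_le_one)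
    then show "0 \<le> (1 - (cmod z)\<^sup>2) * (1 - (cmod x)\<^sup>2)" by simp
    show "0 < (cmod (1 - cnj z * x))\<^sup>2 * (1 - cmod z)\<^sup>2"
      using one_minus_cnj_pos[OF z x] z by (intro mult_pos_pos) auto
  qed
  also have "\<dots> = (1 + cmod z) / (1 - cmod z) * ((1 + cmod x) * (1 - cmod x))"
  proof -
    have ne: "1 - cmod z \<noteq> 0" using z by simp
    have "(1 - (cmod z)\<^sup>2) = (1 + cmod z) * (1 - cmod z)" "(1 - (cmod x)\<^sup>2) = (1 + cmod x) * (1 - cmod x)"
      by (simp_all add: power2_eq_square algebra_simps)
    then show ?thesis using ne by (simp add: power2_eq_square)
  qed
  also have "\<dots> \<le> (1 + cmod z) / (1 - cmod z) * (2 * (1 - cmod x))"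
    using z x by (intro mult_left_mono mult_right_mono) auto
  also have "\<dots> = 2 * (1 + cmod z) / (1 - cmod z) * (1 - cmod x)" using z by (simp add: field_simps)
  finally show ?thesis .
qed

lemma Tz_lower_hball:
  assumes z: "cmod z < 1" and xN: "x \<in> hball N z"
  shows "exp (- N) < Tz z x"
proof -
  have x: "cmod x < 1" and h: "hdist z x < N" using xN by (auto simp: hball_def)
  define m where "m = cmod (mobius z x)"
  have m1: "m < 1" "m \<ge> 0" using mobius_facts(1)[OF z x] by (auto simp: m_def)
  have T: "Tz z x = (1 - m) / (1 + m)" by (simp add: Tz_def m_def)
  have Tp: "Tz z x > 0" using T m1 by simp
  have "hdist z x = ln ((1 + m) / (1 - m))" by (simp add: hdist_def m_def)
  also have "\<dots> = - ln (Tz z x)" using m1 T by (simp add: ln_div)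
  finally have "- ln (Tz z x) < N" using h by simp
  then have "- N < ln (Tz z x)" by simp
  then have "exp (- N) < exp (ln (Tz z x))" by simp
  then show ?thesis using Tp by simp
qed

lemma bergK_diag_norm:
  assumes x: "cmod x < 1"
  shows "cmod (bergK x x) \<le> 1 / (1 - cmod x)\<^sup>2"
proof -
  have h: "x * cnj x = of_real ((cmod x)\<^sup>2)" by (metis complex_norm_square)
  have e: "1 - x * cnj x = complex_of_real (1 - (cmod x)\<^sup>2)" by (metis h of_real_1 of_real_diff)
  have pos: "1 - (cmod x)\<^sup>2 > 0" using x by (simp add: power_less_one_iff abs_less_iff)
  have "cmod (bergK x x) = 1 / (cmod (complex_of_real (1 - (cmod x)\<^sup>2)))\<^sup>2"
    unfolding bergK_def e by (simp add: norm_divide norm_power)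
  also have "\<dots> = 1 / (1 - (cmod x)\<^sup>2)\<^sup>2" using pos by (simp only: norm_of_real abs_of_pos)
  finally have "cmod (bergK x x) = 1 / (1 - (cmod x)\<^sup>2)\<^sup>2" .
  also have "\<dots> \<le> 1 / (1 - cmod x)\<^sup>2"
  proof (rule divide_left_mono)
    have "1 - cmod x \<le> 1 - (cmod x)\<^sup>2" using x by (simp add: power2_eq_square mult_left_le_one_le)
    then show "(1 - cmod x)\<^sup>2 \<le> (1 - (cmod x)\<^sup>2)\<^sup>2" using x by (intro power_mono) auto
    show "0 < (1 - (cmod x)\<^sup>2)\<^sup>2 * (1 - cmod x)\<^sup>2" using x pos
      by (intro mult_pos_pos) auto
  qed simp
  finally show ?thesis .
qed

lemma bergK_off_norm:
  shows "cmod (bergK x y) = 1 / (cmod (1 - x * cnj y))\<^sup>2"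
    and "cmod (bergK y x) = 1 / (cmod (1 - x * cnj y))\<^sup>2"
proof -
  show "cmod (bergK x y) = 1 / (cmod (1 - x * cnj y))\<^sup>2"
    by (simp add: bergK_def norm_divide norm_power)
  have "1 - y * cnj x = cnj (1 - x * cnj y)" by (simp add: mult.commute)
  then have "cmod (1 - y * cnj x) = cmod (1 - x * cnj y)" by (metis complex_mod_cnj)
  then show "cmod (bergK y x) = 1 / (cmod (1 - x * cnj y))\<^sup>2"
    by (simp add: bergK_def norm_divide norm_power)
qed

lemma off_kernel_bound:
  assumes x: "cmod x < 1" and y: "cmod y < 1"
  shows "1 / (cmod (1 - x * cnj y))\<^sup>2 \<le> 1 / ((1 - cmod x) * (1 - cmod y))"
proof (rule divide_left_mono)
  have "cmod (x * cnj y) = cmod x * cmod y" by (simp add: norm_mult)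
  then have c: "cmod (1 - x * cnj y) \<ge> 1 - cmod x * cmod y" by (metis norm_one norm_triangle_ineq2)
  have "1 - cmod x \<le> 1 - cmod x * cmod y" using y by (simp add: mult_left_le)
  moreover have "cmod x * cmod y \<le> 1 * cmod y" using x by (intro mult_right_mono) auto
  then have "1 - cmod y \<le> 1 - cmod x * cmod y" by simp
  ultimately have "(1 - cmod x) * (1 - cmod y) \<le> (1 - cmod x * cmod y) * (1 - cmod x * cmod y)"
    using x y by (intro mult_mono) auto
  also have "\<dots> \<le> (cmod (1 - x * cnj y))\<^sup>2" using c x y
    by (simp add: power2_eq_square) (metis mult_mono' \<open>1 - cmod x \<le> 1 - cmod x * cmod y\<close> diff_ge_0_iff_ge norm_ge_zero order_trans less_imp_le)
  finally show "(1 - cmod x) * (1 - cmod y) \<le> (cmod (1 - x * cnj y))\<^sup>2" .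
  show "0 < (cmod (1 - x * cnj y))\<^sup>2 * ((1 - cmod x) * (1 - cmod y))"
  proof -
    have "0 < (1 - cmod x) * (1 - cmod y)" using x y by simp
    also have "\<dots> \<le> (cmod (1 - x * cnj y))\<^sup>2" by fact
    finally show ?thesis using x y by (intro mult_pos_pos) auto
  qed
qed simp

lemma integrand_bound:
  fixes s :: real and z x1 x2 :: complex
  assumes s: "1 < s" and z: "cmod z < 1" and x1: "cmod x1 < 1" and x2: "cmod x2 < 1"
  defines "C0 \<equiv> 2 * (1 + cmod z) / (1 - cmod z)"
  shows "cmod (complex_of_real (((Tz z x1) powr (3 * s)) * ((Tz z x2) powr s)) *
        (bergK x1 x1 * bergK x1 x2 + bergK x1 x1 * bergK x2 x1) *
        (bergK x1 x1 * bergK x2 x2 - bergK x1 x2 * bergK x2 x1))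
     \<le> 4 * C0 powr (4 * s) * (1 - cmod x1) powr (3 * s - 4) *
        ((1 - cmod x2) powr (s - 2) / (cmod (1 - x1 * cnj x2))\<^sup>2)"
proof -
  define u where "u = 1 - cmod x1"
  define v where "v = 1 - cmod x2"
  define k where "k = 1 / (cmod (1 - x1 * cnj x2))\<^sup>2"
  define A where "A = cmod (bergK x1 x1)"
  define B where "B = cmod (bergK x2 x2)"
  define P where "P = ((Tz z x1) powr (3 * s)) * ((Tz z x2) powr s)"
  have u: "u > 0" and v: "v > 0" using x1 x2 by (auto simp: u_def v_def)
  have C0: "C0 > 0" using z unfolding C0_def by (intro divide_pos_pos) (auto intro!: add_pos_nonneg)
  have A: "0 \<le> A" "A \<le> 1 / u\<^sup>2" using bergK_diag_norm[OF x1] by (auto simp: A_def u_def)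
  have B: "0 \<le> B" "B \<le> 1 / v\<^sup>2" using bergK_diag_norm[OF x2] by (auto simp: B_def v_def)
  have k12: "cmod (bergK x1 x2) = k" "cmod (bergK x2 x1) = k" unfolding k_def by (rule bergK_off_norm(1), rule bergK_off_norm(2))
  have k: "0 \<le> k" "k \<le> 1 / (u * v)" using off_kernel_bound[OF x1 x2] by (auto simp: k_def u_def v_def)
  have T1: "0 \<le> Tz z x1" "Tz z x1 \<le> C0 * u" using Tz_pos[OF z x1] Tz_upper[OF z x1] by (auto simp: C0_def u_def)
  have T2: "0 \<le> Tz z x2" "Tz z x2 \<le> C0 * v" using Tz_pos[OF z x2] Tz_upper[OF z x2] by (auto simp: C0_def v_def)
  have P: "0 \<le> P" "P \<le> (C0 * u) powr (3 * s) * (C0 * v) powr s"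
    unfolding P_def using T1 T2 s by (auto intro!: mult_mono powr_mono2)
  have "cmod (complex_of_real P * (bergK x1 x1 * bergK x1 x2 + bergK x1 x1 * bergK x2 x1) *
        (bergK x1 x1 * bergK x2 x2 - bergK x1 x2 * bergK x2 x1))
     = P * cmod (bergK x1 x1 * bergK x1 x2 + bergK x1 x1 * bergK x2 x1) *
        cmod (bergK x1 x1 * bergK x2 x2 - bergK x1 x2 * bergK x2 x1)"
    using P by (simp add: norm_mult)
  also have "\<dots> \<le> P * (A * k + A * k) * (A * B + k * k)"
  proof (intro mult_mono mult_left_mono)
    show "cmod (bergK x1 x1 * bergK x1 x2 + bergK x1 x1 * bergK x2 x1) \<le> A * k + A * k"
      using norm_triangle_ineq[of "bergK x1 x1 * bergK x1 x2" "bergK x1 x1 * bergK x2 x1"]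
      by (simp add: norm_mult A_def k12)
    show "cmod (bergK x1 x1 * bergK x2 x2 - bergK x1 x2 * bergK x2 x1) \<le> A * B + k * k"
      using norm_triangle_ineq4[of "bergK x1 x1 * bergK x2 x2" "bergK x1 x2 * bergK x2 x1"]
      by (simp add: norm_mult A_def B_def k12)
  qed (use P A B k in auto)
  also have "\<dots> \<le> ((C0 * u) powr (3 * s) * (C0 * v) powr s) * (1 / u\<^sup>2 * k + 1 / u\<^sup>2 * k) *
                   (1 / u\<^sup>2 * (1 / v\<^sup>2) + 1 / (u * v) * (1 / (u * v)))"
    using P A B k u v by (intro mult_mono add_mono mult_right_mono) (auto intro!: add_nonneg_nonneg mult_nonneg_nonneg)
  also have "\<dots> = 4 * C0 powr (4 * s) * (u powr (3 * s) / u ^ 4) * (v powr s / v ^ 2 * k)"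
  proof -
    have "3 * s + s = 4 * s" by simp
    then have c4: "C0 powr (4 * s) = C0 powr (3 * s) * C0 powr s" by (metis powr_add)
    have e1: "(C0 * u) powr (3 * s) * (C0 * v) powr s = C0 powr (4 * s) * u powr (3 * s) * v powr s"
      unfolding c4 using u v C0 by (simp add: powr_mult mult_ac)
    have u4: "u ^ 4 = u * (u * (u * u))" by (simp add: power4_eq_xxxx)
    show ?thesis unfolding e1 using u v by (simp add: field_simps power2_eq_square u4)
  qed
  also have "\<dots> = 4 * C0 powr (4 * s) * u powr (3 * s - 4) * (v powr (s - 2) * k)"
    using u v by (simp add: powr_diff powr_realpow)
  finally show ?thesis by (simp add: P_def A_def B_def k_def u_def v_def divide_inverse)
qed




lemma norm_integral_le_nn:
  fixes f :: "'a \<Rightarrow> 'b::{banach, second_countable_topology}"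
  assumes "(\<integral>\<^sup>+x. ennreal (norm (f x)) \<partial>M) \<le> ennreal B" "0 \<le> B"
  shows "norm (integral\<^sup>L M f) \<le> B"
proof (cases "integrable M f")
  case True
  then have "ennreal (norm (integral\<^sup>L M f)) \<le> (\<integral>\<^sup>+x. ennreal (norm (f x)) \<partial>M)"
    by (rule integral_norm_bound_ennreal)
  also have "\<dots> \<le> ennreal B" by fact
  finally show ?thesis using assms(2) by simp
next
  case False then show ?thesis using assms(2) by (simp add: not_integrable_integral_eq)
qed

lemma double_bound:
  fixes s a \<delta> K1 :: real
  assumes s: "1 < s" and a: "0 < a" "4 - 3 * s \<le> a" and d: "0 < \<delta>" "\<delta> \<le> 1" and K1: "0 \<le> K1"
  defines "Sd \<equiv> {w::complex. cmod w < 1 \<and> \<delta> < 1 - cmod w}"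
  shows "(\<integral>\<^sup>+p. ennreal (K1 * (1 - cmod (fst p)) powr (3 * s - 4) *
               ((1 - cmod (snd p)) powr (s - 2) / (cmod (1 - fst p * cnj (snd p)))\<^sup>2))
              * indicator Sd (fst p) * indicator (ball 0 1) (snd p) \<partial>lborel)
         \<le> ennreal (K1 * (8 * pi / (s - 1)) * (2 * pi * \<delta> powr (-a) / a))"
proof -
  have [measurable]: "Sd \<in> sets borel" unfolding Sd_def by measurable
  define g where "g = (\<lambda>x2 x1::complex. ennreal ((1 - cmod x2) powr (s - 2) / (cmod (1 - x1 * cnj x2))\<^sup>2) * indicator (ball 0 1) x2)"
  have "(\<integral>\<^sup>+p. ennreal (K1 * (1 - cmod (fst p)) powr (3 * s - 4) *
               ((1 - cmod (snd p)) powr (s - 2) / (cmod (1 - fst p * cnj (snd p)))\<^sup>2))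
              * indicator Sd (fst p) * indicator (ball 0 1) (snd p) \<partial>lborel)
      = (\<integral>\<^sup>+x1. \<integral>\<^sup>+x2. ennreal (K1 * (1 - cmod x1) powr (3 * s - 4) *
               ((1 - cmod x2) powr (s - 2) / (cmod (1 - x1 * cnj x2))\<^sup>2))
              * indicator Sd x1 * indicator (ball 0 1) x2 \<partial>lborel \<partial>lborel)"
    by (subst lborel_prod[symmetric], subst lborel.nn_integral_fst[symmetric]) auto
  also have "\<dots> = (\<integral>\<^sup>+x1. (ennreal (K1 * (1 - cmod x1) powr (3 * s - 4)) * indicator Sd x1) *
                     (\<integral>\<^sup>+x2. g x2 x1 \<partial>lborel) \<partial>lborel)"
  proof (rule nn_integral_cong)
    fix x1 :: complex
    have "(\<integral>\<^sup>+x2. ennreal (K1 * (1 - cmod x1) powr (3 * s - 4) *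
               ((1 - cmod x2) powr (s - 2) / (cmod (1 - x1 * cnj x2))\<^sup>2))
              * indicator Sd x1 * indicator (ball 0 1) x2 \<partial>lborel)
        = (\<integral>\<^sup>+x2. (ennreal (K1 * (1 - cmod x1) powr (3 * s - 4)) * indicator Sd x1) * g x2 x1 \<partial>lborel)"
    proof (rule nn_integral_cong)
      fix x2 :: complex
      have n1: "0 \<le> K1 * (1 - cmod x1) powr (3 * s - 4)" using K1 by simp
      have n2: "0 \<le> (1 - cmod x2) powr (s - 2) / (cmod (1 - x1 * cnj x2))\<^sup>2" by simp
      show "ennreal (K1 * (1 - cmod x1) powr (3 * s - 4) *
               ((1 - cmod x2) powr (s - 2) / (cmod (1 - x1 * cnj x2))\<^sup>2))
              * indicator Sd x1 * indicator (ball 0 1) x2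
          = (ennreal (K1 * (1 - cmod x1) powr (3 * s - 4)) * indicator Sd x1) * g x2 x1"
        unfolding g_def ennreal_mult[OF n1 n2] by (simp only: mult_ac)
    qed
    also have "\<dots> = (ennreal (K1 * (1 - cmod x1) powr (3 * s - 4)) * indicator Sd x1) * (\<integral>\<^sup>+x2. g x2 x1 \<partial>lborel)"
      by (rule nn_integral_cmult) (simp add: g_def)
    finally show "(\<integral>\<^sup>+x2. ennreal (K1 * (1 - cmod x1) powr (3 * s - 4) *
               ((1 - cmod x2) powr (s - 2) / (cmod (1 - x1 * cnj x2))\<^sup>2))
              * indicator Sd x1 * indicator (ball 0 1) x2 \<partial>lborel)
        = (ennreal (K1 * (1 - cmod x1) powr (3 * s - 4)) * indicator Sd x1) * (\<integral>\<^sup>+x2. g x2 x1 \<partial>lborel)" .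
  qed
  also have "\<dots> \<le> (\<integral>\<^sup>+x1. ennreal (K1 * (8 * pi / (s - 1))) * (ennreal ((1 - cmod x1) powr (-1 - a)) * indicator Sd x1) \<partial>lborel)"
  proof (rule nn_integral_mono)
    fix x1 :: complex
    show "(ennreal (K1 * (1 - cmod x1) powr (3 * s - 4)) * indicator Sd x1) * (\<integral>\<^sup>+x2. g x2 x1 \<partial>lborel)
        \<le> ennreal (K1 * (8 * pi / (s - 1))) * (ennreal ((1 - cmod x1) powr (-1 - a)) * indicator Sd x1)"
    proof (cases "x1 \<in> Sd")
      case True
      define u where "u = 1 - cmod x1"
      have x1: "cmod x1 < 1" and u: "0 < u" "u \<le> 1" "\<delta> < u" using True by (auto simp: Sd_def u_def)
      have "(\<integral>\<^sup>+x2. g x2 x1 \<partial>lborel) \<le> ennreal (8 * pi / ((s - 1) * u))"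
        unfolding g_def u_def by (rule inner_bound[OF s x1])
      then have "(ennreal (K1 * u powr (3 * s - 4)) * indicator Sd x1) * (\<integral>\<^sup>+x2. g x2 x1 \<partial>lborel)
            \<le> ennreal (K1 * u powr (3 * s - 4)) * ennreal (8 * pi / ((s - 1) * u))"
        using True by (simp add: mult_left_mono)
      also have "\<dots> = ennreal (K1 * (8 * pi / (s - 1)) * u powr (3 * s - 5))"
      proof -
        have "u powr (3 * s - 4) * (1 / u) = u powr (3 * s - 5)"
        proof -
          have h1: "1 / u = u powr (-1)" using u by (simp add: powr_minus divide_inverse)
          have h2: "u powr (3 * s - 4) * u powr (-1) = u powr (3 * s - 4 + (-1))" by (rule powr_add[symmetric])
          have h3: "3 * s - 4 + (-1) = 3 * s - 5" by simp
          show ?thesis using h1 h2 h3 by metis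
        qed
        moreover have "K1 * u powr (3 * s - 4) * (8 * pi / ((s - 1) * u)) = K1 * (8 * pi / (s - 1)) * (u powr (3 * s - 4) * (1 / u))"
          by (simp add: divide_inverse inverse_mult_distrib mult_ac)
        ultimately have "K1 * u powr (3 * s - 4) * (8 * pi / ((s - 1) * u)) = K1 * (8 * pi / (s - 1)) * u powr (3 * s - 5)"
          by simp
        then show ?thesis using K1 s u by (simp add: ennreal_mult[symmetric])
      qed
      also have "\<dots> \<le> ennreal (K1 * (8 * pi / (s - 1)) * u powr (-1 - a))"
        using u a s K1 by (intro ennreal_leI mult_left_mono powr_mono') auto
      finally have F: "(ennreal (K1 * u powr (3 * s - 4)) * indicator Sd x1) * (\<integral>\<^sup>+x2. g x2 x1 \<partial>lborel)
            \<le> ennreal (K1 * (8 * pi / (s - 1)) * u powr (-1 - a))" .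
      have nn: "0 \<le> K1 * (8 * pi / (s - 1))" using K1 s by simp
      have E: "ennreal (K1 * (8 * pi / (s - 1)) * u powr (-1 - a)) = ennreal (K1 * (8 * pi / (s - 1))) * ennreal (u powr (-1 - a))"
        by (rule ennreal_mult[OF nn]) simp
      show ?thesis using F True unfolding E by (simp add: u_def)
    qed simp
  qed
  also have "\<dots> = ennreal (K1 * (8 * pi / (s - 1))) * (\<integral>\<^sup>+x1. ennreal ((1 - cmod x1) powr (-1 - a)) * indicator Sd x1 \<partial>lborel)"
    by (rule nn_integral_cmult) simp
  also have "\<dots> \<le> ennreal (K1 * (8 * pi / (s - 1))) * ennreal (2 * pi * \<delta> powr (-a) / a)"
    unfolding Sd_def by (intro mult_left_mono radial_R2 a d) auto
  also have "\<dots> = ennreal (K1 * (8 * pi / (s - 1)) * (2 * pi * \<delta> powr (-a) / a))"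
    using K1 s a by (simp add: ennreal_mult[symmetric])
  finally show ?thesis .
qed




lemma J_bound:
  fixes s :: real and z :: complex and N a :: real
  assumes s: "1 < s" and z: "cmod z < 1" and a: "0 < a" "4 - 3 * s \<le> a" and N: "0 \<le> N"
  defines "C0 \<equiv> 2 * (1 + cmod z) / (1 - cmod z)"
  shows "cmod (Jprime2 s z N) \<le> 2 * (1 / pi\<^sup>2) *
           ((4 * C0 powr (4 * s)) * (8 * pi / (s - 1)) * (2 * pi * (exp (- N) / C0) powr (-a) / a))"
proof -
  define \<delta> where "\<delta> = exp (- N) / C0"
  define K1 where "K1 = 4 * C0 powr (4 * s)"
  define U where "U = hball N z"
  define Sd where "Sd = {w::complex. cmod w < 1 \<and> \<delta> < 1 - cmod w}"
  define \<Phi> where "\<Phi> = (\<lambda>(x1, x2).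
        complex_of_real (((Tz z x1) powr (3 * s)) * ((Tz z x2) powr s)) *
        (bergK x1 x1 * bergK x1 x2 + bergK x1 x1 * bergK x2 x1) *
        (bergK x1 x1 * bergK x2 x2 - bergK x1 x2 * bergK x2 x1))"
  have C0: "C0 \<ge> 2" using z unfolding C0_def by (simp add: field_simps)
  have d: "0 < \<delta>" "\<delta> \<le> 1"
  proof -
    show "0 < \<delta>" using C0 by (simp add: \<delta>_def)
    have "exp (- N) \<le> 1" using N by simp
    then have "exp (- N) \<le> C0 * 1" using C0 by linarith
    then show "\<delta> \<le> 1" using C0 unfolding \<delta>_def by (subst divide_le_eq) auto
  qed
  have K1: "0 \<le> K1" by (simp add: K1_def)
  define Bnd where "Bnd = K1 * (8 * pi / (s - 1)) * (2 * pi * \<delta> powr (-a) / a)"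
  have Bnd0: "0 \<le> Bnd" using K1 s a d by (simp add: Bnd_def)
  have "(\<integral>\<^sup>+p. ennreal (norm (indicator (U \<times> U) p *\<^sub>R \<Phi> p)) \<partial>lborel)
      \<le> (\<integral>\<^sup>+p. ennreal (K1 * (1 - cmod (fst p)) powr (3 * s - 4) *
               ((1 - cmod (snd p)) powr (s - 2) / (cmod (1 - fst p * cnj (snd p)))\<^sup>2))
              * indicator Sd (fst p) * indicator (ball 0 1) (snd p) \<partial>lborel)"
  proof (rule nn_integral_mono)
    fix p :: "complex \<times> complex"
    obtain x1 x2 where p: "p = (x1, x2)" by (cases p)
    show "ennreal (norm (indicator (U \<times> U) p *\<^sub>R \<Phi> p))
      \<le> ennreal (K1 * (1 - cmod (fst p)) powr (3 * s - 4) *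
               ((1 - cmod (snd p)) powr (s - 2) / (cmod (1 - fst p * cnj (snd p)))\<^sup>2))
              * indicator Sd (fst p) * indicator (ball 0 1) (snd p)"
    proof (cases "p \<in> U \<times> U")
      case True
      then have h1: "x1 \<in> hball N z" and h2: "x2 \<in> hball N z" using p by (auto simp: U_def)
      then have x1: "cmod x1 < 1" and x2: "cmod x2 < 1" by (auto simp: hball_def)
      have "exp (- N) < Tz z x1" by (rule Tz_lower_hball[OF z h1])
      also have "\<dots> \<le> C0 * (1 - cmod x1)" using Tz_upper[OF z x1] by (simp add: C0_def)
      finally have "\<delta> < 1 - cmod x1" using C0 unfolding \<delta>_def by (simp add: divide_less_eq mult.commute)
      then have S1: "x1 \<in> Sd" using x1 by (simp add: Sd_def)
      have B2: "x2 \<in> ball 0 1" using x2 by simp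
      have "norm (indicator (U \<times> U) p *\<^sub>R \<Phi> p) = cmod (\<Phi> (x1, x2))" using True p by simp
      also have "\<dots> \<le> K1 * (1 - cmod x1) powr (3 * s - 4) *
               ((1 - cmod x2) powr (s - 2) / (cmod (1 - x1 * cnj x2))\<^sup>2)"
        unfolding \<Phi>_def K1_def C0_def using integrand_bound[OF s z x1 x2] by simp
      finally show ?thesis using S1 B2 p by (simp add: ennreal_leI)
    qed simp
  qed
  also have "\<dots> \<le> ennreal Bnd" unfolding Bnd_def Sd_def by (rule double_bound[OF s a d K1])
  finally have "norm (LINT p|lborel. indicator (U \<times> U) p *\<^sub>R \<Phi> p) \<le> Bnd"
    by (rule norm_integral_le_nn[OF _ Bnd0])
  then have "cmod (set_lebesgue_integral lborel (U \<times> U) \<Phi>) \<le> Bnd"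
    by (simp add: set_lebesgue_integral_def)
  moreover have "Jprime2 s z N = 2 * complex_of_real (1 / pi\<^sup>2) * set_lebesgue_integral lborel (U \<times> U) \<Phi>"
    by (simp add: Jprime2_def U_def \<Phi>_def)
  moreover have "cmod (2 * complex_of_real (1 / pi\<^sup>2) * set_lebesgue_integral lborel (U \<times> U) \<Phi>)
      = 2 * (1 / pi\<^sup>2) * cmod (set_lebesgue_integral lborel (U \<times> U) \<Phi>)"
    unfolding norm_mult norm_of_real by simp
  ultimately have "cmod (Jprime2 s z N) \<le> 2 * (1 / pi\<^sup>2) * Bnd"
    by (metis mult_left_mono zero_le_divide_1_iff zero_le_numeral zero_le_power2 mult_nonneg_nonneg)
  then show ?thesis by (simp add: Bnd_def K1_def \<delta>_def)
qed

theorem lemma3p2: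
  fixes s :: real
  assumes "1 < s" and "s < 3/2"
  shows "\<exists>c>0. \<forall>z. cmod z < 1 \<longrightarrow>
           (\<forall>\<^sub>F N in at_top. cmod (Jprime2 s z N)
              \<le> c * (1 + cmod z)^4 / (1 - cmod z)^4 * exp ((3 - 2 * s) * N))"
proof (intro exI[of _ 1] conjI allI impI)
  fix z :: complex
  assume z: "cmod z < 1"
  have s: "1 < s" using assms by simp
  define a where "a = (max 0 (4 - 3 * s) + (3 - 2 * s)) / 2"
  have a: "0 < a" "4 - 3 * s \<le> a" "a < 3 - 2 * s" using assms by (auto simp: a_def max_def)
  define C0 where "C0 = 2 * (1 + cmod z) / (1 - cmod z)"
  have C0: "C0 \<ge> 2" using z unfolding C0_def by (simp add: field_simps)
  define Kz where "Kz = 2 * (1 / pi\<^sup>2) * ((4 * C0 powr (4 * s)) * (8 * pi / (s - 1)) * (2 * pi / a)) * C0 powr a"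
  have Kz: "Kz > 0" using s a C0 by (simp add: Kz_def)
  have bound: "cmod (Jprime2 s z N) \<le> Kz * exp (a * N)" if N: "0 \<le> N" for N
  proof -
    have "(exp (- N) / C0) powr (-a) = exp (a * N) * C0 powr a"
    proof -
      have "(exp (- N) / C0) powr (-a) = exp (- N) powr (-a) / C0 powr (-a)" by (rule powr_divide)
      also have "exp (- N) powr (-a) = exp (a * N)" by (simp add: exp_powr_real)
      also have "C0 powr (-a) = inverse (C0 powr a)" by (rule powr_minus)
      finally show ?thesis by (simp add: divide_inverse)
    qed
    then show ?thesis using J_bound[OF s z a(1,2) N] unfolding C0_def[symmetric]
      by (simp add: Kz_def mult_ac)
  qed
  have ratio: "1 \<le> (1 + cmod z)^4 / (1 - cmod z)^4"
  proof -
    have "(1 - cmod z)^4 \<le> (1 + cmod z)^4" using z by (intro power_mono) auto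
    moreover have "(1 - cmod z)^4 > 0" using z by simp
    ultimately show ?thesis by simp
  qed
  show "\<forall>\<^sub>F N in at_top. cmod (Jprime2 s z N) \<le> 1 * (1 + cmod z)^4 / (1 - cmod z)^4 * exp ((3 - 2 * s) * N)"
    using eventually_ge_at_top[of "max 0 (ln Kz / (3 - 2 * s - a))"]
  proof eventually_elim
    case (elim N)
    have N0: "0 \<le> N" using elim by simp
    have "ln Kz / (3 - 2 * s - a) \<le> N" using elim by simp
    then have "ln Kz \<le> (3 - 2 * s - a) * N" using a by (simp add: divide_le_eq mult.commute)
    then have "Kz \<le> exp ((3 - 2 * s - a) * N)" using Kz by (metis exp_le_cancel_iff exp_ln)
    then have "Kz * exp (a * N) \<le> exp ((3 - 2 * s - a) * N) * exp (a * N)" by simp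
    also have "\<dots> = exp ((3 - 2 * s) * N)" by (simp add: exp_add[symmetric] algebra_simps)
    finally have "cmod (Jprime2 s z N) \<le> exp ((3 - 2 * s) * N)" using bound[OF N0] by linarith
    also have "\<dots> \<le> (1 + cmod z)^4 / (1 - cmod z)^4 * exp ((3 - 2 * s) * N)"
      using mult_right_mono[OF ratio, of "exp ((3 - 2 * s) * N)"] by simp
    finally show ?case by simp
  qed
qed simp


end
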